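(* Let $\mathbb{T}$ be a time scale, $\alpha<\beta$ points of $\mathbb{T}$, and let $\varphi,\psi:[\alpha,\beta]_{\mathbb{T}}\to\mathbb{R}$ be nabla differentiable with $\psi^{\nabla}(x)\neq 0$ for $x\in(\alpha,\beta]_{\mathbb{T}}$. Define $$\mathcal{Y}_{\varphi,\psi}(x)=\frac{\varphi^{\nabla}(x)}{\psi^{\nabla}(x)}\psi(x)-\varphi(x),\qquad x\in(\alpha,\beta]_{\mathbb{T}}.$$ Suppose that $\varphi^{\nabla}/\psi^{\nabla}$ is nabla differentiable. Then: (1) If $\psi^{\rho}\ge 0$ and $\varphi^{\nabla}/\psi^{\nabla}$ is increasing (resp. decreasing), then $\mathcal{Y}_{\varphi,\psi}$ is increasing (resp. decreasing). (2) If $\psi^{\rho}\le 0$ and $\varphi^{\nabla}/\psi^{\nabla}$ is increasing (resp. decreasing), then $\mathcal{Y}_{\varphi,\psi}$ is decreasing (resp. increasing).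
   Context: $\mathbb{T}$ is a time scale (nonempty closed subset of $\mathbb{R}$), $[\alpha,\beta]_{\mathbb{T}}=[\alpha,\beta]\cap\mathbb{T}$. $\rho(t)=\sup\{s\in\mathbb{T}:s<t\}$ is the backward jump operator, $f^{\rho}=f\circ\rho$, and $f^{\nabla}$ is the nabla derivative. "Increasing"/"decreasing" are meant in the non-strict sense (nondecreasing/nonincreasing). *)

theory Defs
  imports "HOL-Analysis.Analysis"
begin

definition time_scale :: "real set \<Rightarrow> bool" where
  "time_scale T \<longleftrightarrow> T \<noteq> {} \<and> closed T"

text \<open>Backward jump operator; convention: rho(min T) = min T.\<close>
definition backward_jump :: "real set \<Rightarrow> real \<Rightarrow> real" where
  "backward_jump T t = (if \<exists>s\<in>T. s < t then Sup {s\<in>T. s < t} else t)"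

definition has_nabla_derivative :: "real set \<Rightarrow> (real \<Rightarrow> real) \<Rightarrow> real \<Rightarrow> real \<Rightarrow> bool" where
  "has_nabla_derivative T f D t \<longleftrightarrow>
     (\<forall>\<epsilon>>0. \<exists>\<delta>>0. \<forall>s\<in>T. \<bar>t - s\<bar> < \<delta> \<longrightarrow>
        \<bar>f (backward_jump T t) - f s - D * (backward_jump T t - s)\<bar>
          \<le> \<epsilon> * \<bar>backward_jump T t - s\<bar>)"

end

theory Submission
  imports Defs
begin


lemma bj_props:
  fixes S :: "real set"
  assumes "s0 \<in> S" "s0 < x"
  shows "\<forall>s\<in>S. s < x \<longrightarrow> s \<le> backward_jump S x"
    and "backward_jump S x \<le> x"
    and "\<forall>d. d < backward_jump S x \<longrightarrow> (\<exists>s\<in>S. d < s \<and> s < x)"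
proof -
  let ?A = "{s\<in>S. s < x}"
  have ne: "?A \<noteq> {}" using assms by blast
  have bdd: "bdd_above ?A" by (rule bdd_aboveI[of _ x]) auto
  have eq: "backward_jump S x = Sup ?A" using assms unfolding backward_jump_def by auto
  show "\<forall>s\<in>S. s < x \<longrightarrow> s \<le> backward_jump S x"
    using cSup_upper[OF _ bdd] eq by auto
  show "backward_jump S x \<le> x"
    using cSup_least[OF ne, of x] eq by auto
  show "\<forall>d. d < backward_jump S x \<longrightarrow> (\<exists>s\<in>S. d < s \<and> s < x)"
    using less_cSup_iff[OF ne bdd] eq by auto
qed

lemma bj_restrict:
  fixes T :: "real set"
  assumes "\<alpha> \<in> T" "x \<in> T" "\<alpha> < x" "x \<le> \<beta>"
  shows "backward_jump (T \<inter> {\<alpha>..\<beta>}) x = backward_jump T x"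
proof -
  let ?A = "{s\<in>T. s < x}"
  let ?B = "{s\<in>T \<inter> {\<alpha>..\<beta>}. s < x}"
  have aB: "\<alpha> \<in> ?B" using assms by auto
  hence neA: "?A \<noteq> {}" and neB: "?B \<noteq> {}" by auto
  have bddA: "bdd_above ?A" by (rule bdd_aboveI[of _ x]) auto
  have bddB: "bdd_above ?B" by (rule bdd_aboveI[of _ x]) auto
  have eA: "backward_jump T x = Sup ?A" using assms unfolding backward_jump_def by auto
  have exB: "\<exists>s\<in>T \<inter> {\<alpha>..\<beta>}. s < x" using assms by auto
  have eB: "backward_jump (T \<inter> {\<alpha>..\<beta>}) x = Sup ?B" using exB unfolding backward_jump_def by simp
  have "Sup ?B \<le> Sup ?A" by (rule cSup_subset_mono[OF neB bddA]) auto
  moreover have "Sup ?A \<le> Sup ?B"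
  proof (rule cSup_least[OF neA])
    fix s assume s: "s \<in> ?A"
    have "\<alpha> \<le> Sup ?B" by (rule cSup_upper[OF _ bddB]) (use assms in auto)
    moreover have "s \<ge> \<alpha> \<Longrightarrow> s \<le> Sup ?B" by (rule cSup_upper[OF _ bddB]) (use assms s in auto)
    ultimately show "s \<le> Sup ?B" by linarith
  qed
  ultimately show ?thesis using eA eB by linarith
qed

lemma nabla_ls:
  assumes "has_nabla_derivative S f D x" "x \<in> S" "backward_jump S x < x"
  shows "f x - f (backward_jump S x) = D * (x - backward_jump S x)"
proof (rule ccontr)
  let ?r = "backward_jump S x"
  let ?E = "\<bar>f ?r - f x - D * (?r - x)\<bar>"
  assume "\<not> ?thesis"
  hence Epos: "?E > 0" by (auto simp: algebra_simps)
  have rp: "\<bar>?r - x\<bar> > 0" using assms by auto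
  define e where "e = ?E / (2 * \<bar>?r - x\<bar>)"
  have "e > 0" using Epos rp by (auto simp: e_def)
  then obtain d where "d > 0" and d: "\<forall>s\<in>S. \<bar>x - s\<bar> < d \<longrightarrow>
        \<bar>f ?r - f s - D * (?r - s)\<bar> \<le> e * \<bar>?r - s\<bar>"
    using assms(1) unfolding has_nabla_derivative_def by blast
  hence "?E \<le> e * \<bar>?r - x\<bar>" using assms(2) by auto
  also have "\<dots> = ?E / 2" using rp by (simp add: e_def)
  finally have "?E \<le> ?E / 2" .
  thus False using Epos by simp
qed

lemma nabla_cont:
  assumes "has_nabla_derivative S f D x" "x \<in> S"
  shows "continuous (at x within S) f"
  unfolding continuous_within_eps_delta
proof (intro allI impI)
  fix e :: real assume e: "e > 0"
  let ?r = "backward_jump S x"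
  define K where "K = \<bar>?r - x\<bar>"
  define e' where "e' = e / (4 * (2*K+1))"
  have K0: "K \<ge> 0" by (simp add: K_def)
  have e'0: "e' > 0" using e K0 by (simp add: e'_def)
  obtain d0 where d0: "d0 > 0" and hd: "\<forall>s\<in>S. \<bar>x - s\<bar> < d0 \<longrightarrow>
        \<bar>f ?r - f s - D * (?r - s)\<bar> \<le> e' * \<bar>?r - s\<bar>"
    using assms(1) e'0 unfolding has_nabla_derivative_def by blast
  define d where "d = min d0 (min 1 (e / (2 * (\<bar>D\<bar> + 1))))"
  have d: "d > 0" using d0 e by (simp add: d_def)
  show "\<exists>d>0. \<forall>x'\<in>S. dist x' x < d \<longrightarrow> dist (f x') (f x) < e"
  proof (intro exI[of _ d] conjI ballI impI d)
    fix s assume s: "s \<in> S" "dist s x < d"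
    have sx: "\<bar>x - s\<bar> < d" using s by (simp add: dist_real_def abs_minus_commute)
    have h1: "\<bar>f ?r - f s - D * (?r - s)\<bar> \<le> e' * \<bar>?r - s\<bar>" using hd s sx d_def by auto
    have h2: "\<bar>f ?r - f x - D * (?r - x)\<bar> \<le> e' * K" using hd assms(2) d0 K_def by auto
    have "\<bar>x - s\<bar> < 1" using sx d_def by auto
    hence "\<bar>?r - s\<bar> \<le> K + 1" unfolding K_def by arith
    hence h1': "e' * \<bar>?r - s\<bar> \<le> e' * (K + 1)" using e'0 by (intro mult_left_mono) auto
    have "\<bar>f s - f x\<bar> \<le> \<bar>D\<bar> * \<bar>x - s\<bar> + e' * (2*K+1)"
    proof -
      have "\<bar>f s - f x\<bar> \<le> \<bar>D * (s - x)\<bar> + \<bar>f ?r - f s - D * (?r - s)\<bar> + \<bar>f ?r - f x - D * (?r - x)\<bar>"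
        by (simp add: algebra_simps abs_triangle_ineq)
      also have "\<dots> \<le> \<bar>D\<bar> * \<bar>x - s\<bar> + e' * (K + 1) + e' * K"
        using h1 h1' h2 by (simp add: abs_mult abs_minus_commute)
      finally show ?thesis by (simp add: algebra_simps)
    qed
    also have "\<bar>D\<bar> * \<bar>x - s\<bar> \<le> \<bar>D\<bar> * (e / (2 * (\<bar>D\<bar> + 1)))"
      using sx d_def by (intro mult_left_mono) auto
    also have "\<bar>D\<bar> * (e / (2 * (\<bar>D\<bar> + 1))) < e / 2"
      using e by (simp add: field_simps)
    also have "e' * (2*K+1) = e / 4"
    proof -
      have "2*K+1 > 0" using K0 by simp
      thus ?thesis unfolding e'_def by (simp add: field_simps)
    qed
    finally show "dist (f s) (f x) < e" using e by (simp add: dist_real_def)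
  qed
qed



lemma ts_mvt:
  fixes S :: "real set" and g :: "real \<Rightarrow> real"
  assumes cl: "closed S" and aS: "a \<in> S" and bS: "b \<in> S" and ab: "a \<le> b"
    and H1: "\<And>x y. x \<in> S \<Longrightarrow> a < x \<Longrightarrow> x \<le> b \<Longrightarrow> y \<in> S \<Longrightarrow> y < x
               \<Longrightarrow> (\<forall>s\<in>S. \<not> (y < s \<and> s < x)) \<Longrightarrow> g y \<le> g x"
    and H2: "\<And>x e. x \<in> S \<Longrightarrow> a < x \<Longrightarrow> x \<le> b \<Longrightarrow> e > 0
               \<Longrightarrow> \<exists>d>0. \<forall>s\<in>S. x - d < s \<and> s < x \<longrightarrow> g s \<le> g x + e * (x - s)"
    and H3: "\<And>x e. x \<in> S \<Longrightarrow> a \<le> x \<Longrightarrow> x < b \<Longrightarrow> e > 0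
               \<Longrightarrow> \<exists>d>0. \<forall>s\<in>S. x < s \<and> s < x + d \<longrightarrow> g x \<le> g s + e"
  shows "g a \<le> g b"
proof -
  have key: "g a \<le> g b + \<epsilon> * (b - a)" if \<epsilon>: "\<epsilon> > 0" for \<epsilon>
  proof -
    define B where "B = {t\<in>S. a \<le> t \<and> t \<le> b \<and>
                          (\<forall>u\<in>S. t \<le> u \<and> u \<le> b \<longrightarrow> g u \<le> g b + \<epsilon> * (b - u))}"
    have bB: "b \<in> B" using bS ab unfolding B_def by auto
    hence Bne: "B \<noteq> {}" by auto
    have bdd: "bdd_below B" unfolding B_def by (rule bdd_belowI[of _ a]) auto
    define c where "c = Inf B"
    have ac: "a \<le> c" unfolding c_def by (rule cInf_greatest[OF Bne]) (auto simp: B_def)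
    have cb: "c \<le> b" unfolding c_def by (rule cInf_lower[OF bB bdd])
    have BS: "B \<subseteq> S" unfolding B_def by auto
    have cS: "c \<in> S"
      using closure_contains_Inf[OF Bne bdd] closure_minimal[OF BS cl] c_def by auto
    have less: "\<exists>t\<in>B. t < v" if "c < v" for v
      using that cInf_less_iff[OF Bne bdd] c_def by auto
    have gc: "g c \<le> g b + \<epsilon> * (b - c)"
    proof (cases "c \<in> B")
      case True thus ?thesis unfolding B_def by auto
    next
      case False
      hence cb': "c < b" using cb bB by (cases "c = b") auto
      show ?thesis
      proof (rule ccontr)
        assume nt: "\<not> ?thesis"
        define \<eta> where "\<eta> = (g c - g b - \<epsilon> * (b - c)) / 2"
        have \<eta>: "\<eta> > 0" using nt by (simp add: \<eta>_def)
        obtain d where d: "d > 0" and hd: "\<forall>s\<in>S. c < s \<and> s < c + d \<longrightarrow> g c \<le> g s + \<eta>"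
          using H3[OF cS ac cb' \<eta>] by blast
        obtain t where t: "t \<in> B" "t < c + d" using less[of "c + d"] d by auto
        have tc: "c \<le> t" unfolding c_def by (rule cInf_lower[OF t(1) bdd])
        have "t \<noteq> c" using t False by auto
        hence tc': "c < t" using tc by auto
        have tS: "t \<in> S" "t \<le> b" using t BS unfolding B_def by auto
        have "g t \<le> g b + \<epsilon> * (b - t)" using t(1) tS unfolding B_def by auto
        moreover have "g c \<le> g t + \<eta>" using hd tS t tc' by auto
        moreover have "\<epsilon> * (b - t) \<le> \<epsilon> * (b - c)" using \<epsilon> tc by (intro mult_left_mono) auto
        ultimately have "g c \<le> g b + \<epsilon> * (b - c) + \<eta>" by linarith
        thus False using nt unfolding \<eta>_def by (simp add: field_simps)
      qed
    qed
    have cB: "c \<in> B"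
    proof -
      have "g u \<le> g b + \<epsilon> * (b - u)" if u: "u \<in> S" "c \<le> u" "u \<le> b" for u
      proof (cases "u = c")
        case True thus ?thesis using gc by simp
      next
        case False
        hence "c < u" using u by auto
        then obtain t where t: "t \<in> B" "t < u" using less by auto
        thus ?thesis using u unfolding B_def by auto
      qed
      thus ?thesis using cS ac cb unfolding B_def by auto
    qed
    have ca: "c = a"
    proof (rule ccontr)
      assume "c \<noteq> a"
      hence ac': "a < c" using ac by auto
      show False
      proof (cases "\<exists>y\<in>S. y < c \<and> (\<forall>s\<in>S. \<not> (y < s \<and> s < c))")
        case True
        then obtain y where y: "y \<in> S" "y < c" "\<forall>s\<in>S. \<not> (y < s \<and> s < c)" by blast
        have ay: "a \<le> y" using y(3) aS ac' by force
        have gy: "g y \<le> g c" using H1[OF cS ac' cb y(1) y(2) y(3)] .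
        have "y \<in> B"
        proof -
          have "g u \<le> g b + \<epsilon> * (b - u)" if u: "u \<in> S" "y \<le> u" "u \<le> b" for u
          proof (cases "u = y")
            case True
            have "\<epsilon> * (b - c) \<le> \<epsilon> * (b - y)" using \<epsilon> y by (intro mult_left_mono) auto
            thus ?thesis using True gy cB unfolding B_def by auto
          next
            case False
            hence "c \<le> u" using u y(3) by force
            thus ?thesis using cB u unfolding B_def by auto
          qed
          thus ?thesis using y ay cb unfolding B_def by auto
        qed
        hence "c \<le> y" unfolding c_def by (rule cInf_lower[OF _ bdd])
        thus False using y by auto
      next
        case False
        hence dense: "\<forall>y\<in>S. y < c \<longrightarrow> (\<exists>s\<in>S. y < s \<and> s < c)" by blast
        obtain d where d: "d > 0" and hd: "\<forall>s\<in>S. c - d < s \<and> s < c \<longrightarrow> g s \<le> g c + \<epsilon> * (c - s)"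
          using H2[OF cS ac' cb \<epsilon>] by blast
        define dd where "dd = max a (c - d)"
        have ddc: "dd < c" using d ac' by (simp add: dd_def)
        define M where "M = S \<inter> {a..dd}"
        have aM: "a \<in> M" using aS by (simp add: M_def dd_def)
        have Mne: "M \<noteq> {}" using aM by auto
        have Mbdd: "bdd_above M" unfolding M_def by (rule bdd_aboveI[of _ dd]) auto
        have Mcl: "closed M" unfolding M_def using cl by (intro closed_Int) auto
        have y1M: "Sup M \<in> M" by (rule closed_contains_Sup[OF Mne Mbdd Mcl])
        have y1: "Sup M \<in> S" "Sup M \<le> dd" using y1M by (auto simp: M_def)
        obtain s where s: "s \<in> S" "Sup M < s" "s < c" using dense y1 ddc by force
        have sdd: "dd < s"
        proof (rule ccontr)
          assume "\<not> dd < s"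
          hence "s \<in> M" using s y1M by (auto simp: M_def)
          hence "s \<le> Sup M" by (rule cSup_upper[OF _ Mbdd])
          thus False using s by auto
        qed
        have "s \<in> B"
        proof -
          have "g u \<le> g b + \<epsilon> * (b - u)" if u: "u \<in> S" "s \<le> u" "u \<le> b" for u
          proof (cases "u < c")
            case True
            have "c - d < u" using sdd u by (simp add: dd_def)
            hence "g u \<le> g c + \<epsilon> * (c - u)" using hd u True by auto
            moreover have "g c \<le> g b + \<epsilon> * (b - c)" using cB unfolding B_def by auto
            ultimately show ?thesis by (simp add: algebra_simps)
          next
            case False
            thus ?thesis using cB u unfolding B_def by auto
          qed
          moreover have "a \<le> s" using sdd by (simp add: dd_def)
          ultimately show ?thesis using s cb unfolding B_def by auto
        qed
        hence "c \<le> s" unfolding c_def by (rule cInf_lower[OF _ bdd])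
        thus False using s by auto
      qed
    qed
    show ?thesis using cB ca aS unfolding B_def by auto
  qed
  show ?thesis
  proof (cases "a = b")
    case True thus ?thesis by simp
  next
    case False
    hence ba: "b - a > 0" using ab by auto
    show ?thesis
    proof (rule ccontr)
      assume nt: "\<not> ?thesis"
      hence pos: "(g a - g b) / (2 * (b - a)) > 0" using ba by simp
      have "g a \<le> g b + (g a - g b) / (2 * (b - a)) * (b - a)" by (rule key[OF pos])
      also have "\<dots> = g b + (g a - g b) / 2" using ba by (simp add: field_simps)
      finally show False using nt by (simp add: field_simps)
    qed
  qed
qed



lemma nabla_dense:
  assumes "has_nabla_derivative S f D x" "backward_jump S x = x" "\<epsilon> > 0"
  shows "\<exists>\<delta>>0. \<forall>s\<in>S. \<bar>x - s\<bar> < \<delta> \<longrightarrow> \<bar>f x - f s - D * (x - s)\<bar> \<le> \<epsilon> * \<bar>x - s\<bar>"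
  using assms unfolding has_nabla_derivative_def by metis

lemma core:
  fixes T :: "real set" and \<alpha> \<beta> :: real
    and \<phi> \<psi> \<phi>' \<psi>' R r' :: "real \<Rightarrow> real"
  assumes clT: "closed T" and aT: "\<alpha> \<in> T" and abe: "\<alpha> < \<beta>"
    and dphi: "\<forall>x\<in>T \<inter> {\<alpha><..\<beta>}. has_nabla_derivative (T \<inter> {\<alpha>..\<beta>}) \<phi> (\<phi>' x) x"
    and dpsi: "\<forall>x\<in>T \<inter> {\<alpha><..\<beta>}. has_nabla_derivative (T \<inter> {\<alpha>..\<beta>}) \<psi> (\<psi>' x) x"
    and dR: "\<forall>x\<in>T \<inter> {\<alpha><..\<beta>}. has_nabla_derivative (T \<inter> {\<alpha>..\<beta>}) R (r' x) x"
    and rel: "\<forall>x\<in>T \<inter> {\<alpha><..\<beta>}. R x * \<psi>' x = \<phi>' x"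
    and pos: "\<forall>x\<in>T \<inter> {\<alpha><..\<beta>}. \<psi> (backward_jump T x) \<ge> 0"
    and mono: "mono_on (T \<inter> {\<alpha><..\<beta>}) R"
  shows "mono_on (T \<inter> {\<alpha><..\<beta>}) (\<lambda>x. R x * \<psi> x - \<phi> x)"
proof (rule mono_onI)
  define S where "S = T \<inter> {\<alpha>..\<beta>}"
  define Y where "Y = (\<lambda>x. R x * \<psi> x - \<phi> x)"
  define I where "I = T \<inter> {\<alpha><..\<beta>}"
  have clS: "closed S" unfolding S_def using clT by (intro closed_Int) auto
  have aS: "\<alpha> \<in> S" using aT abe by (simp add: S_def)
  have IS: "x \<in> I \<longleftrightarrow> x \<in> S \<and> \<alpha> < x" for x unfolding I_def S_def by auto
  have rho: "backward_jump S x = backward_jump T x" if "x \<in> I" for x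
    using bj_restrict[OF aT, of x \<beta>] that unfolding I_def S_def by auto
  have bjp: "\<forall>s\<in>S. s < x \<longrightarrow> s \<le> backward_jump S x"
    "backward_jump S x \<le> x"
    "\<forall>d. d < backward_jump S x \<longrightarrow> (\<exists>s\<in>S. d < s \<and> s < x)" if "x \<in> I" for x
    using bj_props[OF aS, of x] that IS by auto
  fix a b assume a: "a \<in> T \<inter> {\<alpha><..\<beta>}" and b: "b \<in> T \<inter> {\<alpha><..\<beta>}" and ab: "a \<le> b"
  have aI: "a \<in> I" and bI: "b \<in> I" using a b by (auto simp: I_def)
  have "Y a \<le> Y b"
  proof (rule ts_mvt[OF clS _ _ ab])
    show "a \<in> S" "b \<in> S" using aI bI IS by auto
  next
    fix x y assume x: "x \<in> S" "a < x" "x \<le> b" and y: "y \<in> S" "y < x"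
      and gap: "\<forall>s\<in>S. \<not> (y < s \<and> s < x)"
    have xI: "x \<in> I" using x aI IS by auto
    have ay: "a \<le> y" using gap aI IS x by force
    have yI: "y \<in> I" using ay aI IS y by auto
    have r: "backward_jump S x = y"
    proof -
      have "y \<le> backward_jump S x" using bjp(1)[OF xI] y by auto
      moreover have "\<not> y < backward_jump S x" using bjp(3)[OF xI] gap by blast
      ultimately show ?thesis by auto
    qed
    have ex: "\<phi> x - \<phi> y = \<phi>' x * (x - y)"
      using nabla_ls[of S \<phi> "\<phi>' x" x] dphi xI x y r unfolding I_def S_def by auto
    have ey: "\<psi> x - \<psi> y = \<psi>' x * (x - y)"
      using nabla_ls[of S \<psi> "\<psi>' x" x] dpsi xI x y r unfolding I_def S_def by auto
    have Rxy: "R y \<le> R x" using mono yI xI y unfolding I_def by (auto dest: mono_onD)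
    have py: "\<psi> y \<ge> 0" using pos xI rho[OF xI] r unfolding I_def by auto
    have "Y x - Y y = (R x - R y) * \<psi> y"
    proof -
      have "Y x - Y y = R x * \<psi> x - R y * \<psi> y - (\<phi> x - \<phi> y)" by (simp add: Y_def)
      also have "\<dots> = R x * \<psi> x - R y * \<psi> y - R x * (\<psi> x - \<psi> y)"
        using ex ey rel xI unfolding I_def by (simp add: mult.assoc)
      finally show ?thesis by (simp add: algebra_simps)
    qed
    moreover have "(R x - R y) * \<psi> y \<ge> 0" using Rxy py by simp
    ultimately show "Y y \<le> Y x" by simp
  next
    fix x e :: real assume x: "x \<in> S" "a < x" "x \<le> b" and e: "e > 0"
    have xI: "x \<in> I" using x aI IS by auto
    show "\<exists>d>0. \<forall>s\<in>S. x - d < s \<and> s < x \<longrightarrow> Y s \<le> Y x + e * (x - s)"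
    proof (cases "backward_jump S x < x")
      case True
      show ?thesis
      proof (intro exI[of _ "x - backward_jump S x"] conjI ballI impI)
        show "x - backward_jump S x > 0" using True by simp
        fix s assume s: "s \<in> S" "x - (x - backward_jump S x) < s \<and> s < x"
        thus "Y s \<le> Y x + e * (x - s)" using bjp(1)[OF xI] by force
      qed
    next
      case False
      hence rx: "backward_jump S x = x" using bjp(2)[OF xI] by linarith
      have px: "\<psi> x \<ge> 0" using pos xI rho[OF xI] rx unfolding I_def by metis
      define A where "A = \<bar>R x\<bar> + 1"
      define L where "L = \<bar>r' x\<bar> + 1"
      have A: "A > 0" "\<bar>R x\<bar> \<le> A" "1 \<le> A" unfolding A_def by auto
      have L: "L > 0" unfolding L_def by auto
      define e1 where "e1 = e / (3 * A)"
      define \<eta> where "\<eta> = e / (3 * L)"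
      have e1: "e1 > 0" using e A by (simp add: e1_def)
      have \<eta>: "\<eta> > 0" using e L by (simp add: \<eta>_def)
      obtain d1 where d1: "d1 > 0" and h1: "\<forall>s\<in>S. \<bar>x - s\<bar> < d1 \<longrightarrow>
          \<bar>\<phi> x - \<phi> s - \<phi>' x * (x - s)\<bar> \<le> e1 * \<bar>x - s\<bar>"
        using nabla_dense[OF _ rx e1] dphi xI unfolding I_def S_def by blast
      obtain d2 where d2: "d2 > 0" and h2: "\<forall>s\<in>S. \<bar>x - s\<bar> < d2 \<longrightarrow>
          \<bar>\<psi> x - \<psi> s - \<psi>' x * (x - s)\<bar> \<le> e1 * \<bar>x - s\<bar>"
        using nabla_dense[OF _ rx e1] dpsi xI unfolding I_def S_def by blast
      obtain d3 where d3: "d3 > 0" and h3: "\<forall>s\<in>S. \<bar>x - s\<bar> < d3 \<longrightarrow>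
          \<bar>R x - R s - r' x * (x - s)\<bar> \<le> 1 * \<bar>x - s\<bar>"
        using nabla_dense[OF _ rx, of R "r' x" 1] dR xI unfolding I_def S_def by auto
      have "continuous (at x within S) \<psi>" using nabla_cont dpsi xI x unfolding S_def I_def by blast
      then obtain d4 where d4: "d4 > 0" and h4: "\<forall>s\<in>S. dist s x < d4 \<longrightarrow> dist (\<psi> s) (\<psi> x) < \<eta>"
        using \<eta> unfolding continuous_within_eps_delta by blast
      define d where "d = min (min d1 d2) (min (min d3 d4) (x - \<alpha>))"
      have d: "d > 0" using d1 d2 d3 d4 xI IS by (simp add: d_def)
      show ?thesis
      proof (intro exI[of _ d] conjI ballI impI d)
        fix s assume s: "s \<in> S" "x - d < s \<and> s < x"
        have xs: "\<bar>x - s\<bar> = x - s" "x - s > 0" using s by auto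
        have sd: "\<bar>x - s\<bar> < d1" "\<bar>x - s\<bar> < d2" "\<bar>x - s\<bar> < d3" "dist s x < d4" "\<alpha> < s"
          using s xs by (auto simp: d_def dist_real_def)
        have sI: "s \<in> I" using s sd IS by auto
        have Rsx: "R s \<le> R x" using mono sI xI s unfolding I_def by (auto dest: mono_onD)
        define E\<phi> where "E\<phi> = \<phi> x - \<phi> s - \<phi>' x * (x - s)"
        define E\<psi> where "E\<psi> = \<psi> x - \<psi> s - \<psi>' x * (x - s)"
        have bE\<phi>: "\<bar>E\<phi>\<bar> \<le> e1 * (x - s)" using h1 s sd xs by (auto simp: E\<phi>_def)
        have bE\<psi>: "\<bar>E\<psi>\<bar> \<le> e1 * (x - s)" using h2 s sd xs by (auto simp: E\<psi>_def)
        have bR: "\<bar>R x - R s\<bar> \<le> L * (x - s)"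
        proof -
          have "\<bar>R x - R s - r' x * (x - s)\<bar> \<le> x - s" using h3 s sd xs by auto
          moreover have "\<bar>r' x * (x - s)\<bar> = \<bar>r' x\<bar> * (x - s)" using xs by (simp add: abs_mult)
          ultimately show ?thesis unfolding L_def by (simp add: algebra_simps)
        qed
        have bpsi: "\<bar>\<psi> s - \<psi> x\<bar> \<le> \<eta>" using h4 s sd by (auto simp: dist_real_def)
        have P: "(R x - R s) * \<psi> x \<ge> 0" using Rsx px by simp
        have Q: "\<bar>(R x - R s) * (\<psi> s - \<psi> x)\<bar> \<le> e / 3 * (x - s)"
        proof -
          have "\<bar>(R x - R s) * (\<psi> s - \<psi> x)\<bar> \<le> (L * (x - s)) * \<eta>"
            unfolding abs_mult by (rule mult_mono[OF bR bpsi]) (use L xs in auto)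
          also have "\<dots> = e / 3 * (x - s)" using L by (simp add: \<eta>_def field_simps)
          finally show ?thesis .
        qed
        have U: "\<bar>R x * E\<psi>\<bar> \<le> e / 3 * (x - s)"
        proof -
          have "\<bar>R x * E\<psi>\<bar> \<le> A * (e1 * (x - s))"
            unfolding abs_mult by (rule mult_mono[OF A(2) bE\<psi>]) (use A in auto)
          also have "\<dots> = e / 3 * (x - s)" using A by (simp add: e1_def field_simps)
          finally show ?thesis .
        qed
        have V: "\<bar>E\<phi>\<bar> \<le> e / 3 * (x - s)"
        proof -
          have "e1 \<le> e / 3" unfolding e1_def using A e by (simp add: field_simps)
          hence "e1 * (x - s) \<le> e / 3 * (x - s)" using xs by (intro mult_right_mono) auto
          thus ?thesis using bE\<phi> by linarith
        qed
        have iden: "Y x - Y s = (R x - R s) * \<psi> x + (R x - R s) * (\<psi> s - \<psi> x) + R x * E\<psi> - E\<phi>"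
        proof -
          have "\<phi>' x = R x * \<psi>' x" using rel xI unfolding I_def by auto
          thus ?thesis unfolding Y_def E\<phi>_def E\<psi>_def by (simp add: algebra_simps)
        qed
        have "Y x - Y s \<ge> - (e * (x - s))" using iden P Q U V by (simp add: abs_le_iff)
        thus "Y s \<le> Y x + e * (x - s)" by linarith
      qed
    qed
  next
    fix x e :: real assume x: "x \<in> S" "a \<le> x" "x < b" and e: "e > 0"
    have xI: "x \<in> I" using x aI IS by auto
    have "continuous (at x within S) Y"
    proof -
      have "continuous (at x within S) R" using nabla_cont dR xI x unfolding S_def I_def by blast
      moreover have "continuous (at x within S) \<psi>" using nabla_cont dpsi xI x unfolding S_def I_def by blast
      moreover have "continuous (at x within S) \<phi>" using nabla_cont dphi xI x unfolding S_def I_def by blast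
      ultimately show ?thesis unfolding Y_def by (intro continuous_intros)
    qed
    then obtain d where d: "d > 0" and hd: "\<forall>s\<in>S. dist s x < d \<longrightarrow> dist (Y s) (Y x) < e"
      using e unfolding continuous_within_eps_delta by blast
    show "\<exists>d>0. \<forall>s\<in>S. x < s \<and> s < x + d \<longrightarrow> Y x \<le> Y s + e"
    proof (intro exI[of _ d] conjI ballI impI d)
      fix s assume s: "s \<in> S" "x < s \<and> s < x + d"
      hence "dist (Y s) (Y x) < e" using hd by (auto simp: dist_real_def)
      thus "Y x \<le> Y s + e" by (simp add: dist_real_def)
    qed
  qed
  thus "Y a \<le> Y b" .
qed



lemma nabla_neg:
  assumes "has_nabla_derivative S f D x"
  shows "has_nabla_derivative S (\<lambda>t. - f t) (- D) x"
proof -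
  have e: "\<And>a b c d :: real. \<bar>- a - - b - (- d) * c\<bar> = \<bar>a - b - d * c\<bar>" by arith
  show ?thesis using assms unfolding has_nabla_derivative_def by (simp only: e)
qed

lemma mono_neg: "mono_on A (\<lambda>x. - (f x :: real)) \<longleftrightarrow> antimono_on A f"
  unfolding monotone_on_def by auto

lemma mono_negD: "mono_on A (\<lambda>x. - (f x :: real)) \<Longrightarrow> antimono_on A f"
  unfolding monotone_on_def by auto

lemma antimono_neg: "antimono_on A (\<lambda>x. - (f x :: real)) \<longleftrightarrow> mono_on A f"
  unfolding monotone_on_def by auto

theorem proposition2p2:
  fixes T :: "real set" and \<alpha> \<beta> :: real
    and \<phi> \<psi> \<phi>' \<psi>' r' :: "real \<Rightarrow> real"
  assumes ts: "time_scale T"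
    and ab: "\<alpha> \<in> T" "\<beta> \<in> T" "\<alpha> < \<beta>"
    and dphi: "\<forall>x\<in>T \<inter> {\<alpha><..\<beta>}. has_nabla_derivative (T \<inter> {\<alpha>..\<beta>}) \<phi> (\<phi>' x) x"
    and dpsi: "\<forall>x\<in>T \<inter> {\<alpha><..\<beta>}. has_nabla_derivative (T \<inter> {\<alpha>..\<beta>}) \<psi> (\<psi>' x) x"
    and nz: "\<forall>x\<in>T \<inter> {\<alpha><..\<beta>}. \<psi>' x \<noteq> 0"
    and dratio: "\<forall>x\<in>T \<inter> {\<alpha><..\<beta>}.
                   has_nabla_derivative (T \<inter> {\<alpha>..\<beta>}) (\<lambda>t. \<phi>' t / \<psi>' t) (r' x) x"
  shows
    "((\<forall>x\<in>T \<inter> {\<alpha><..\<beta>}. \<psi> (backward_jump T x) \<ge> 0) \<longrightarrow>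
        (mono_on (T \<inter> {\<alpha><..\<beta>}) (\<lambda>t. \<phi>' t / \<psi>' t)
           \<longrightarrow> mono_on (T \<inter> {\<alpha><..\<beta>}) (\<lambda>x. \<phi>' x / \<psi>' x * \<psi> x - \<phi> x)) \<and>
        (antimono_on (T \<inter> {\<alpha><..\<beta>}) (\<lambda>t. \<phi>' t / \<psi>' t)
           \<longrightarrow> antimono_on (T \<inter> {\<alpha><..\<beta>}) (\<lambda>x. \<phi>' x / \<psi>' x * \<psi> x - \<phi> x))) \<and>
     ((\<forall>x\<in>T \<inter> {\<alpha><..\<beta>}. \<psi> (backward_jump T x) \<le> 0) \<longrightarrow>
        (mono_on (T \<inter> {\<alpha><..\<beta>}) (\<lambda>t. \<phi>' t / \<psi>' t)
           \<longrightarrow> antimono_on (T \<inter> {\<alpha><..\<beta>}) (\<lambda>x. \<phi>' x / \<psi>' x * \<psi> x - \<phi> x)) \<and>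
        (antimono_on (T \<inter> {\<alpha><..\<beta>}) (\<lambda>t. \<phi>' t / \<psi>' t)
           \<longrightarrow> mono_on (T \<inter> {\<alpha><..\<beta>}) (\<lambda>x. \<phi>' x / \<psi>' x * \<psi> x - \<phi> x)))"
proof -
  have clT: "closed T" using ts unfolding time_scale_def by auto
  let ?I = "T \<inter> {\<alpha><..\<beta>}"
  let ?S = "T \<inter> {\<alpha>..\<beta>}"
  let ?R = "\<lambda>t. \<phi>' t / \<psi>' t"
  let ?Y = "\<lambda>x. \<phi>' x / \<psi>' x * \<psi> x - \<phi> x"
  have rel: "\<forall>x\<in>?I. ?R x * \<psi>' x = \<phi>' x" using nz by auto
  have ndphi: "\<forall>x\<in>?I. has_nabla_derivative ?S (\<lambda>t. - \<phi> t) (- \<phi>' x) x"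
    using dphi nabla_neg by blast
  have ndpsi: "\<forall>x\<in>?I. has_nabla_derivative ?S (\<lambda>t. - \<psi> t) (- \<psi>' x) x"
    using dpsi nabla_neg by blast
  have ndR: "\<forall>x\<in>?I. has_nabla_derivative ?S (\<lambda>t. - ?R t) (- r' x) x"
    using dratio nabla_neg by blast
  have c1: "mono_on ?I ?Y" if p: "\<forall>x\<in>?I. \<psi> (backward_jump T x) \<ge> 0" and m: "mono_on ?I ?R"
    using core[OF clT ab(1) ab(3) dphi dpsi dratio rel p m] by simp
  have c2: "antimono_on ?I ?Y" if p: "\<forall>x\<in>?I. \<psi> (backward_jump T x) \<ge> 0" and m: "antimono_on ?I ?R"
  proof -
    have rel': "\<forall>x\<in>?I. - ?R x * \<psi>' x = - \<phi>' x" using rel by simp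
    have m': "mono_on ?I (\<lambda>t. - ?R t)" using m unfolding monotone_on_def by auto
    have "mono_on ?I (\<lambda>x. - ?R x * \<psi> x - - \<phi> x)"
      using core[OF clT ab(1) ab(3) ndphi dpsi ndR rel' p m'] by simp
    hence "mono_on ?I (\<lambda>x. - ?Y x)" by simp
    thus ?thesis by (rule mono_negD[of _ ?Y])
  qed
  have c3: "antimono_on ?I ?Y" if p: "\<forall>x\<in>?I. \<psi> (backward_jump T x) \<le> 0" and m: "mono_on ?I ?R"
  proof -
    have rel': "\<forall>x\<in>?I. ?R x * - \<psi>' x = - \<phi>' x" using rel by simp
    have p': "\<forall>x\<in>?I. - \<psi> (backward_jump T x) \<ge> 0" using p by auto
    have "mono_on ?I (\<lambda>x. ?R x * - \<psi> x - - \<phi> x)"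
      using core[OF clT ab(1) ab(3) ndphi ndpsi dratio rel' p' m] by simp
    hence "mono_on ?I (\<lambda>x. - ?Y x)" by simp
    thus ?thesis by (rule mono_negD[of _ ?Y])
  qed
  have c4: "mono_on ?I ?Y" if p: "\<forall>x\<in>?I. \<psi> (backward_jump T x) \<le> 0" and m: "antimono_on ?I ?R"
  proof -
    have rel': "\<forall>x\<in>?I. - ?R x * - \<psi>' x = \<phi>' x" using rel by simp
    have p': "\<forall>x\<in>?I. - \<psi> (backward_jump T x) \<ge> 0" using p by auto
    have m': "mono_on ?I (\<lambda>t. - ?R t)" using m unfolding monotone_on_def by auto
    have "mono_on ?I (\<lambda>x. - ?R x * - \<psi> x - \<phi> x)"
      using core[OF clT ab(1) ab(3) dphi ndpsi ndR rel' p' m'] by simp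
    thus ?thesis by simp
  qed
  show ?thesis using c1 c2 c3 c4 by blast
qed


end
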